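(* Let $A$ be a finite-dimensional Leibniz algebra over a field. Then $A$ is nilpotent if and only if $A$ satisfies condition $k$, i.e. the only subalgebra $K$ of $A$ with $K+A^2=A$ is $K=A$.
   Context: A (left) Leibniz algebra is an algebra satisfying $x(yz)=(xy)z+y(xz)$ for all $x,y,z$. $A^2=AA$; lower central series $A^1=A$, $A^{j+1}=AA^j$; $A$ is nilpotent if $A^t=0$ for some $t$. *)

theory Defs
  imports Complex_Main
begin

text \<open>The algebra A is the whole carrier type 'v.\<close>

definition leibniz_algebra :: "('k::field \<Rightarrow> 'v::ab_group_add \<Rightarrow> 'v) \<Rightarrow> ('v \<Rightarrow> 'v \<Rightarrow> 'v) \<Rightarrow> bool" where
  "leibniz_algebra scale m \<longleftrightarrow>
     Vector_Spaces.vector_space scale \<and>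
     (\<forall>x. Vector_Spaces.linear scale scale (m x)) \<and>
     (\<forall>y. Vector_Spaces.linear scale scale (\<lambda>x. m x y)) \<and>
     (\<forall>x y z. m x (m y z) = m (m x y) z + m y (m x z))"

definition finite_dim :: "('k::field \<Rightarrow> 'v::ab_group_add \<Rightarrow> 'v) \<Rightarrow> bool" where
  "finite_dim scale \<longleftrightarrow> (\<exists>B. finite B \<and> module.span scale B = UNIV)"

definition prod_sp :: "('k::field \<Rightarrow> 'v::ab_group_add \<Rightarrow> 'v) \<Rightarrow> ('v \<Rightarrow> 'v \<Rightarrow> 'v) \<Rightarrow> 'v set \<Rightarrow> 'v set \<Rightarrow> 'v set" where
  "prod_sp scale m X Y = module.span scale {m x y | x y. x \<in> X \<and> y \<in> Y}"

text \<open>Lower central series, shifted: lcs j = A^(j+1); lcs 0 = A, lcs (Suc j) = A (lcs j).\<close>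
fun lcs :: "('k::field \<Rightarrow> 'v::ab_group_add \<Rightarrow> 'v) \<Rightarrow> ('v \<Rightarrow> 'v \<Rightarrow> 'v) \<Rightarrow> nat \<Rightarrow> 'v set" where
  "lcs scale m 0 = UNIV"
| "lcs scale m (Suc j) = prod_sp scale m UNIV (lcs scale m j)"

definition nilpotent_alg :: "('k::field \<Rightarrow> 'v::ab_group_add \<Rightarrow> 'v) \<Rightarrow> ('v \<Rightarrow> 'v \<Rightarrow> 'v) \<Rightarrow> bool" where
  "nilpotent_alg scale m \<longleftrightarrow> (\<exists>t. lcs scale m t = {0})"

definition subalgebra :: "('k::field \<Rightarrow> 'v::ab_group_add \<Rightarrow> 'v) \<Rightarrow> ('v \<Rightarrow> 'v \<Rightarrow> 'v) \<Rightarrow> 'v set \<Rightarrow> bool" where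
  "subalgebra scale m K \<longleftrightarrow> module.subspace scale K \<and> (\<forall>x\<in>K. \<forall>y\<in>K. m x y \<in> K)"

definition condition_k :: "('k::field \<Rightarrow> 'v::ab_group_add \<Rightarrow> 'v) \<Rightarrow> ('v \<Rightarrow> 'v \<Rightarrow> 'v) \<Rightarrow> bool" where
  "condition_k scale m \<longleftrightarrow>
     (\<forall>K. subalgebra scale m K \<and> {k + a | k a. k \<in> K \<and> a \<in> prod_sp scale m UNIV UNIV} = UNIV
          \<longrightarrow> K = UNIV)"

end

theory Submission
  imports Defs
begin

declare lcs.simps(2)[simp del]

locale leib = finite_dimensional_vector_space scale Basis
  for scale :: "'k::field \<Rightarrow> 'v::ab_group_add \<Rightarrow> 'v" (infixr \<open>*s\<close> 75) and Basis +
  fixes m :: "'v \<Rightarrow> 'v \<Rightarrow> 'v"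
  assumes addL: "m (a + b) c = m a c + m b c"
    and addR: "m a (b + c) = m a b + m a c"
    and scaleL: "m (k *s a) b = k *s m a b"
    and scaleR: "m a (k *s b) = k *s m a b"
    and leibniz: "m x (m y z) = m (m x y) z + m y (m x z)"
begin

lemma zeroL[simp]: "m 0 b = 0"
  using addL[of 0 0 b] by simp
lemma zeroR[simp]: "m a 0 = 0"
  using addR[of a 0 0] by simp
lemma negL: "m (- a) b = - m a b"
  using addL[of a "-a" b] by (simp add: eq_neg_iff_add_eq_0 add.commute)
lemma negR: "m a (- b) = - m a b"
  using addR[of a b "-b"] by (simp add: eq_neg_iff_add_eq_0 add.commute)
lemma diffL: "m (a - b) c = m a c - m b c"
  using addL[of a "-b" c] negL by simp
lemma diffR: "m a (b - c) = m a b - m a c"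
  using addR[of a b "-c"] negR by simp

lemma mult_spanR:
  assumes W: "subspace W" and Y: "\<And>y. y \<in> Y \<Longrightarrow> m x y \<in> W" and y: "y \<in> span Y"
  shows "m x y \<in> W"
proof -
  have "subspace {y. m x y \<in> W}"
    using W by (auto simp: subspace_def addR scaleR)
  then show ?thesis using span_induct[OF y, of "\<lambda>y. m x y \<in> W"] Y by auto
qed

lemma mult_spanL:
  assumes W: "subspace W" and X: "\<And>x. x \<in> X \<Longrightarrow> m x y \<in> W" and x: "x \<in> span X"
  shows "m x y \<in> W"
proof -
  have "subspace {x. m x y \<in> W}"
    using W by (auto simp: subspace_def addL scaleL)
  then show ?thesis using span_induct[OF x, of "\<lambda>x. m x y \<in> W"] X by auto
qed

lemma sq_zero: "m (m x x) v = 0"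
  using leibniz[of x x v] by simp

definition stab :: "'v set \<Rightarrow> 'v set \<Rightarrow> bool" where
  "stab S U \<longleftrightarrow> (\<forall>s\<in>S. \<forall>u\<in>U. m s u \<in> U)"


lemma span_insert_sub: "subspace M \<Longrightarrow> x \<in> span (insert y M) \<Longrightarrow> \<exists>k a. a \<in> M \<and> x = a + k *s y"
  using span_breakdown_eq[of x y M] by (metis diff_add_cancel span_eq_iff)

lemma chain_lemma:
  assumes "\<And>u. u \<in> X \<Longrightarrow> m y u \<in> X"
  shows "u \<in> X \<Longrightarrow> u \<notin> W \<Longrightarrow> (m y ^^ k) u \<in> W \<Longrightarrow> \<exists>u'\<in>X. u' \<notin> W \<and> m y u' \<in> W"
proof (induction k arbitrary: u)
  case 0
  then show ?case by simp
next
  case (Suc k)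
  show ?case
  proof (cases "m y u \<in> W")
    case True
    then show ?thesis using Suc by blast
  next
    case False
    have "(m y ^^ k) (m y u) \<in> W" using Suc.prems(3) by (simp add: funpow_Suc_right del: funpow.simps)
    then show ?thesis using Suc.IH[of "m y u"] False assms Suc.prems(1) by blast
  qed
qed

lemma zset_sub: "subspace {z. \<forall>v. m z v = 0}"
  by (auto simp: subspace_def addL scaleL)

lemma engel:
  assumes nilp: "\<And>x v. \<exists>k. (m x ^^ k) v = 0"
  shows "subspace S \<Longrightarrow> (\<forall>a\<in>S. \<forall>b\<in>S. m a b \<in> S) \<Longrightarrow> subspace U \<Longrightarrow> subspace W \<Longrightarrow> W \<subset> U
     \<Longrightarrow> stab S U \<Longrightarrow> stab S W \<Longrightarrow> \<exists>u\<in>U. u \<notin> W \<and> (\<forall>s\<in>S. m s u \<in> W)"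
proof (induction "dim S" arbitrary: S U W rule: less_induct)
  case less
  define Z where "Z = {z. \<forall>v. m z v = 0}"
  show ?case
  proof (cases "S \<subseteq> Z")
    case True
    obtain u where "u \<in> U" "u \<notin> W" using less.prems(5) by blast
    moreover have "\<forall>s\<in>S. m s u = 0" using True by (auto simp: Z_def)
    ultimately show ?thesis using less.prems(4) subspace_0[of W] by metis
  next
    case False
    define P where "P M \<longleftrightarrow> subspace M \<and> M \<subseteq> S \<and> M \<noteq> S \<and> S \<inter> Z \<subseteq> M \<and> (\<forall>a\<in>M. \<forall>b\<in>M. m a b \<in> M)" for M
    have Z0: "subspace Z" unfolding Z_def by (rule zset_sub)
    have "P (S \<inter> Z)"
      unfolding P_def using False less.prems(1) Z0 subspace_inter
      by (auto simp: Z_def subspace_0)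
    then obtain M where PM: "P M" and Mmax: "\<And>M'. P M' \<Longrightarrow> dim M' \<le> dim M"
      using Lattices_Big.ex_has_greatest_nat[of P "S \<inter> Z" dim "dim (UNIV::'v set) + 1"]
      using dim_subset[of _ UNIV] by (auto simp: less_Suc_eq_le)
    have Msub: "subspace M" "M \<subseteq> S" "M \<noteq> S" "S \<inter> Z \<subseteq> M" and Mcl: "\<forall>a\<in>M. \<forall>b\<in>M. m a b \<in> M"
      using PM by (auto simp: P_def)
    have dimM: "dim M < dim S"
    proof -
      have e1: "span M = M" by (rule span_eq_iff[THEN iffD2, OF Msub(1)])
      have e2: "span S = S" by (rule span_eq_iff[THEN iffD2, OF less.prems(1)])
      have "M \<subset> S" using Msub(2,3) by auto
      then show ?thesis using dim_psubset[of M S] unfolding e1 e2 by blast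
    qed
    have "stab M S" using less.prems(2) Msub unfolding stab_def by blast
    moreover have "stab M M" using Mcl unfolding stab_def by blast
    ultimately obtain y where y: "y \<in> S" "y \<notin> M" "\<forall>b\<in>M. m b y \<in> M"
      using less.hyps[OF dimM Msub(1) Mcl less.prems(1) Msub(1)] Msub less.prems(1) by blast
    have sqM: "m a a \<in> M" if "a \<in> S" for a
      using Msub(4) less.prems(2) that sq_zero by (auto simp: Z_def)
    have yb: "m y b \<in> M" if "b \<in> M" for b
    proof -
      have "m (y + b) (y + b) = m y y + m y b + m b y + m b b"
        by (simp add: addL addR)
      then have "m y b = m (y + b) (y + b) - m y y - m b b - m b y"
        by (simp add: algebra_simps)
      moreover have "y + b \<in> S" using y that Msub less.prems(1) by (auto simp: subspace_add)
      ultimately show ?thesis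
        using sqM[of "y+b"] sqM[of y] sqM[of b] y that Msub(1,2)
        by (auto intro!: subspace_diff)
    qed
    define T where "T = span (insert y M)"
    have Tsub: "subspace T" "T \<subseteq> S"
    proof -
      have "insert y M \<subseteq> S" using y(1) Msub(2) by auto
      then show "T \<subseteq> S" unfolding T_def using span_minimal less.prems(1) by blast
    qed (simp add: T_def)
    have MT: "M \<subseteq> T" "y \<in> T" unfolding T_def by (auto intro: span_base)
    have Tcl: "\<forall>a\<in>T. \<forall>b\<in>T. m a b \<in> T"
    proof (intro ballI)
      fix a b assume "a \<in> T" "b \<in> T"
      then obtain k a' l b' where "a' \<in> M" "a = a' + k *s y" "b' \<in> M" "b = b' + l *s y"
        using span_insert_sub Msub(1) T_def by blast
      then have "m a b = m a' b' + l *s m a' y + k *s m y b' + (k * l) *s m y y"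
        by (simp add: addL addR scaleL scaleR algebra_simps)
      moreover have "m a' b' \<in> M" "m a' y \<in> M" "m y b' \<in> M" "m y y \<in> M"
        using Mcl y yb sqM \<open>a' \<in> M\<close> \<open>b' \<in> M\<close> by auto
      ultimately have "m a b \<in> M" using Msub(1) by (simp add: subspace_add subspace_scale)
      then show "m a b \<in> T" using MT by auto
    qed
    have "dim M < dim T"
    proof -
      have e1: "span M = M" by (rule span_eq_iff[THEN iffD2, OF Msub(1)])
      have e2: "span T = T" by (rule span_eq_iff[THEN iffD2, OF Tsub(1)])
      have "M \<subset> T" using MT y(2) by auto
      then show ?thesis using dim_psubset[of M T] unfolding e1 e2 by blast
    qed
    then have "\<not> P T" using Mmax by (meson not_le)
    then have TS: "T = S" using Tsub Tcl MT Msub(4) unfolding P_def by auto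
    have SM: "m s b \<in> M" if "s \<in> S" "b \<in> M" for s b
    proof -
      have "s \<in> T" using TS that by simp
      then obtain k a where "a \<in> M" "s = a + k *s y" using span_insert_sub Msub(1) T_def by blast
      then show ?thesis using Mcl yb that Msub(1) by (auto simp: addL scaleL subspace_add subspace_scale)
    qed
    define X where "X = {u \<in> U. \<forall>b\<in>M. m b u \<in> W}"
    have stMU: "stab M U" "stab M W" using less.prems(6,7) Msub(2) unfolding stab_def by blast+
    obtain u0 where u0: "u0 \<in> U" "u0 \<notin> W" "\<forall>b\<in>M. m b u0 \<in> W"
      using less.hyps[OF dimM Msub(1) Mcl less.prems(3,4,5) stMU] by blast
    have Xst: "m y u \<in> X" if "u \<in> X" for u
    proof -
      have uU: "u \<in> U" and uW: "\<forall>b\<in>M. m b u \<in> W" using that by (auto simp: X_def)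
      have "m y u \<in> U" using less.prems(6) y(1) uU unfolding stab_def by blast
      moreover have "m b (m y u) \<in> W" if "b \<in> M" for b
      proof -
        have "m (m b y) u \<in> W" using y(3) that uW by blast
        moreover have "m y (m b u) \<in> W" using less.prems(7) y(1) uW that unfolding stab_def by blast
        ultimately show ?thesis using leibniz[of b y u] less.prems(4) by (simp add: subspace_add)
      qed
      ultimately show ?thesis by (simp add: X_def)
    qed
    obtain k where "(m y ^^ k) u0 = 0" using nilp by blast
    then have "(m y ^^ k) u0 \<in> W" using less.prems(4) by (simp add: subspace_0)
    moreover have "u0 \<in> X" using u0 by (simp add: X_def)
    ultimately obtain u where u: "u \<in> X" "u \<notin> W" "m y u \<in> W"
      using chain_lemma[of X y u0 W k] Xst u0(2) by blast
    have "m s u \<in> W" if "s \<in> S" for s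
    proof -
      have "s \<in> T" using TS that by simp
      then obtain k a where "a \<in> M" "s = a + k *s y" using span_insert_sub Msub(1) T_def by blast
      moreover have "m a u \<in> W" using u(1) \<open>a \<in> M\<close> by (simp add: X_def)
      ultimately show ?thesis using u(3) less.prems(4) by (simp add: addL scaleL subspace_add subspace_scale)
    qed
    then show ?thesis using u X_def by auto
  qed
qed

abbreviation "LC \<equiv> lcs scale m"

lemma lcs_Suc: "LC (Suc j) = span {m x y | x y. y \<in> LC j}"
  by (simp add: prod_sp_def lcs.simps(2))

lemma lcs_sub: "subspace (LC j)"
  by (cases j) (simp_all add: lcs_Suc)

lemma lcs_mem: "y \<in> LC j \<Longrightarrow> m x y \<in> LC (Suc j)"
  unfolding lcs_Suc by (rule span_base) blast

lemma lcs_mono: "LC (Suc j) \<subseteq> LC j"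
proof (induction j)
  case 0
  then show ?case by simp
next
  case (Suc j)
  have "{m x y | x y. y \<in> LC (Suc j)} \<subseteq> {m x y | x y. y \<in> LC j}" using Suc by blast
  then show ?case unfolding lcs_Suc[of "Suc j"] lcs_Suc[of j] by (rule span_mono)
qed

lemma lcs_stab: "y \<in> LC j \<Longrightarrow> m x y \<in> LC j"
  using lcs_mem lcs_mono by blast

lemma engel_nil:
  assumes nilp: "\<And>x v. \<exists>k. (m x ^^ k) v = 0" and ne: "LC j \<noteq> {0}"
  shows "dim (LC (Suc j)) < dim (LC j)"
proof -
  define U where "U = LC j"
  define Q where "Q W \<longleftrightarrow> subspace W \<and> W \<subseteq> U \<and> W \<noteq> U \<and> stab UNIV W" for W
  have "Q {0}" unfolding Q_def stab_def U_def using ne lcs_sub[of j] subspace_0 by auto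
  then obtain W where QW: "Q W" and Wmax: "\<And>W'. Q W' \<Longrightarrow> dim W' \<le> dim W"
    using Lattices_Big.ex_has_greatest_nat[of Q "{0}" dim "dim (UNIV::'v set) + 1"]
    using dim_subset[of _ UNIV] by (auto simp: less_Suc_eq_le)
  have W: "subspace W" "W \<subseteq> U" "W \<noteq> U" "stab UNIV W" using QW by (auto simp: Q_def)
  have Us: "subspace U" "stab UNIV U" unfolding U_def stab_def using lcs_sub lcs_stab by auto
  have "W \<subset> U" using W by auto
  obtain u where u: "u \<in> U" "u \<notin> W" "\<forall>s\<in>UNIV. m s u \<in> W"
    using engel[OF nilp subspace_UNIV _ Us(1) W(1) \<open>W \<subset> U\<close> Us(2) W(4)] by auto
  define T where "T = span (insert u W)"
  have Tprop: "m x t \<in> W" if tT: "t \<in> T" for x t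
  proof -
    obtain k a where "a \<in> W" "t = a + k *s u" using span_insert_sub W(1) T_def tT by blast
    then show ?thesis using u(3) W(1,4) unfolding stab_def by (simp add: addR scaleR subspace_add subspace_scale)
  qed
  have Ts: "subspace T" "T \<subseteq> U" "W \<subseteq> T" "u \<in> T"
  proof -
    have "insert u W \<subseteq> U" using u(1) W(2) by auto
    then show "T \<subseteq> U" unfolding T_def using span_minimal Us(1) by blast
  qed (auto simp: T_def intro: span_base)
  have "stab UNIV T" using Tprop Ts(3) unfolding stab_def by blast
  moreover have "dim W < dim T"
  proof -
    have e1: "span W = W" by (rule span_eq_iff[THEN iffD2, OF W(1)])
    have e2: "span T = T" by (rule span_eq_iff[THEN iffD2, OF Ts(1)])
    have "W \<subset> T" using Ts u(2) by auto
    then show ?thesis using dim_psubset[of W T] unfolding e1 e2 by blast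
  qed
  ultimately have "T = U" using Wmax[of T] Ts unfolding Q_def by (meson not_le)
  then have "LC (Suc j) \<subseteq> W"
  proof -
    have "{m x y | x y. y \<in> LC j} \<subseteq> W" using Tprop \<open>T = U\<close> U_def by blast
    then show ?thesis unfolding lcs_Suc using span_minimal W(1) by blast
  qed
  then have "LC (Suc j) \<subset> LC j" using W U_def lcs_mono[of j] by auto
  moreover have e: "span (LC (Suc j)) = LC (Suc j)" "span (LC j) = LC j"
    using lcs_sub span_eq_iff by blast+
  ultimately show ?thesis using dim_psubset[of "LC (Suc j)" "LC j"] unfolding e by blast
qed

lemma engel_nilpotent:
  assumes nilp: "\<And>x v. \<exists>k. (m x ^^ k) v = 0"
  shows "\<exists>t. LC t = {0}"
proof -
  have "LC j = {0} \<or> dim (LC j) + j \<le> dim (UNIV::'v set)" for j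
  proof (induction j)
    case 0
    then show ?case by simp
  next
    case (Suc j)
    show ?case
    proof (cases "LC j = {0}")
      case True
      then have "LC (Suc j) = {0}" using lcs_mono[of j] lcs_sub[of "Suc j"] subspace_0 by blast
      then show ?thesis by simp
    next
      case False
      then show ?thesis using Suc engel_nil[OF nilp False] by auto
    qed
  qed
  from this[of "Suc (dim (UNIV::'v set))"]
  have "LC (Suc (dim (UNIV::'v set))) = {0}" by linarith
  then show ?thesis by blast
qed

lemma lcs_mono_add: "LC (i + d) \<subseteq> LC i"
  by (induction d) (use lcs_mono in auto)

lemma lcs_prod: "a \<in> LC i \<Longrightarrow> b \<in> LC k \<Longrightarrow> m a b \<in> LC (i + k + 1)"
proof (induction i arbitrary: k a b)
  case 0
  then show ?case using lcs_mem by simp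
next
  case (Suc i)
  have "a \<in> span {m x y | x y. y \<in> LC i}" using Suc.prems(1) lcs_Suc by blast
  then show ?case
  proof (rule mult_spanL[OF lcs_sub, rotated])
    fix g assume "g \<in> {m x y | x y. y \<in> LC i}"
    then obtain u v where g: "g = m u v" "v \<in> LC i" by blast
    have "m g b = m u (m v b) - m v (m u b)" using leibniz[of u v b] g by (simp add: algebra_simps)
    moreover have "m u (m v b) \<in> LC (Suc i + k + 1)"
      using Suc.IH[OF g(2) Suc.prems(2)] lcs_mem by simp
    moreover have "m v (m u b) \<in> LC (Suc i + k + 1)"
      using Suc.IH[OF g(2) lcs_mem[OF Suc.prems(2)]] by simp
    ultimately show "m g b \<in> LC (Suc i + k + 1)" using lcs_sub by (simp add: subspace_diff)
  qed
qed

lemma nil_condk: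
  assumes t: "LC t = {0}" and K: "subspace K" "\<forall>x\<in>K. \<forall>y\<in>K. m x y \<in> K"
    and KA: "{k + a | k a. k \<in> K \<and> a \<in> prod_sp scale m UNIV UNIV} = UNIV"
  shows "K = UNIV"
proof -
  define S where "S j = {k + a | k a. k \<in> K \<and> a \<in> LC j}" for j
  have Ssub: "subspace (S j)" for j unfolding S_def using subspace_sums K(1) lcs_sub by blast
  have S1: "S (Suc 0) = UNIV" using KA by (simp add: S_def lcs.simps)
  have step: "LC j \<subseteq> S (Suc j)" for j
  proof (induction j)
    case 0
    then show ?case using S1 by simp
  next
    case (Suc j)
    have "{m x y | x y. y \<in> LC j} \<subseteq> S (Suc (Suc j))"
    proof safe
      fix x y assume y: "y \<in> LC j"
      obtain k' a where ka: "k' \<in> K" "a \<in> LC (Suc 0)" "x = k' + a" using S1 unfolding S_def by blast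
      obtain k y' where ky: "k \<in> K" "y' \<in> LC (Suc j)" "y = k + y'" using Suc y unfolding S_def by blast
      have "y' \<in> LC j" using ky(2) lcs_mono by blast
      then have kj: "k \<in> LC j" using ky(3) y lcs_sub[of j] subspace_diff by fastforce
      have "m x y = m k' k + (m k' y' + m a k + m a y')"
        using ka ky by (simp add: addL addR algebra_simps)
      moreover have "m k' k \<in> K" using K(2) ka ky by blast
      moreover have "m k' y' \<in> LC (Suc (Suc j))" using lcs_mem ky(2) by blast
      moreover have "m a k \<in> LC (Suc (Suc j))" using lcs_prod[OF ka(2) kj] by simp
      moreover have "m a y' \<in> LC (Suc (Suc j))"
        using lcs_prod[OF ka(2) ky(2)] lcs_mono by auto
      ultimately have "m x y = m k' k + (m k' y' + m a k + m a y')" "m k' k \<in> K"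
        "m k' y' + m a k + m a y' \<in> LC (Suc (Suc j))" using lcs_sub subspace_add by auto
      then show "m x y \<in> S (Suc (Suc j))" unfolding S_def by blast
    qed
    then show ?case unfolding lcs_Suc[of j] using span_minimal Ssub by blast
  qed
  have "S j = UNIV" for j
  proof (induction j)
    case 0
    then show ?case unfolding S_def using K(1) subspace_0 by force
  next
    case (Suc j)
    show ?case
    proof safe
      fix v
      obtain k a where "k \<in> K" "a \<in> LC j" "v = k + a" using Suc unfolding S_def by blast
      moreover obtain k2 a2 where "k2 \<in> K" "a2 \<in> LC (Suc j)" "a = k2 + a2"
        using step \<open>a \<in> LC j\<close> unfolding S_def by blast
      ultimately have "v = (k + k2) + a2" "k + k2 \<in> K" "a2 \<in> LC (Suc j)"
        using K(1) subspace_add by (auto simp: add.assoc)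
      then show "v \<in> S (Suc j)" unfolding S_def by blast
    qed simp
  qed
  then have "S t = UNIV" by simp
  then show ?thesis using t unfolding S_def by auto
qed

lemma pow_add: "(m x ^^ n) (a + b) = (m x ^^ n) a + (m x ^^ n) b"
  by (induction n) (simp_all add: addR)
lemma pow_scale: "(m x ^^ n) (c *s a) = c *s (m x ^^ n) a"
  by (induction n) (simp_all add: scaleR)
lemma pow_zero: "(m x ^^ n) 0 = 0"
  by (induction n) simp_all
lemma pow_diff: "(m x ^^ n) (a - b) = (m x ^^ n) a - (m x ^^ n) b"
  by (induction n) (simp_all add: diffR)

lemma pow_prod: "(m x ^^ p) a = 0 \<Longrightarrow> (m x ^^ q) b = 0 \<Longrightarrow> (m x ^^ (p + q)) (m a b) = 0"
proof (induction "p + q" arbitrary: p q a b rule: less_induct)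
  case less
  show ?case
  proof (cases "p = 0 \<or> q = 0")
    case True
    then show ?thesis using less.prems by (auto simp: pow_zero)
  next
    case False
    then obtain p' q' where pq: "p = Suc p'" "q = Suc q'" by (meson not0_implies_Suc)
    have a: "(m x ^^ p') (m x a) = 0" using less.prems(1) pq by (simp add: funpow_Suc_right del: funpow.simps)
    have b: "(m x ^^ q') (m x b) = 0" using less.prems(2) pq by (simp add: funpow_Suc_right del: funpow.simps)
    have "(m x ^^ (p' + q)) (m (m x a) b) = 0" using less.hyps[OF _ a less.prems(2)] pq by simp
    moreover have "(m x ^^ (p + q')) (m a (m x b)) = 0" using less.hyps[OF _ less.prems(1) b] pq by simp
    ultimately have "(m x ^^ (p' + q)) (m x (m a b)) = 0"
      using pq leibniz[of x a b] by (simp add: pow_add addR)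
    then show ?thesis using pq by (simp add: funpow_Suc_right del: funpow.simps)
  qed
qed

lemma condk_nilp:
  assumes ck: "\<And>K. subspace K \<Longrightarrow> (\<forall>x\<in>K. \<forall>y\<in>K. m x y \<in> K)
      \<Longrightarrow> {k + a | k a. k \<in> K \<and> a \<in> prod_sp scale m UNIV UNIV} = UNIV \<Longrightarrow> K = UNIV"
  shows "\<exists>k. (m x ^^ k) v = 0"
proof -
  define L where "L = m x"
  define K where "K = {v. \<exists>k. (L ^^ k) v = 0}"
  define I where "I n = range (L ^^ n)" for n
  have later: "(L ^^ (k + j)) v = 0" if "(L ^^ k) v = 0" for k j v
  proof -
    have "(L ^^ (k + j)) v = (L ^^ j) ((L ^^ k) v)" by (simp add: funpow_add add.commute)
    then show ?thesis using that pow_zero by (simp add: L_def)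
  qed
  have Ksub: "subspace K"
    unfolding subspace_def K_def
  proof safe
    show "\<exists>k. (L ^^ k) 0 = 0" by (auto intro: exI[of _ 0])
  next
    fix a b ka kb assume "(L ^^ ka) a = 0" "(L ^^ kb) b = 0"
    then show "\<exists>k. (L ^^ k) (a + b) = 0"
      using later[of ka a kb] later[of kb b ka] by (auto simp: L_def pow_add add.commute intro!: exI[of _ "ka + kb"])
  next
    fix c a k assume "(L ^^ k) a = 0"
    then show "\<exists>k. (L ^^ k) (c *s a) = 0" by (auto simp: L_def pow_scale)
  qed
  have Kcl: "\<forall>a\<in>K. \<forall>b\<in>K. m a b \<in> K"
    unfolding K_def L_def using pow_prod by blast
  have Isub: "subspace (I n)" for n
    unfolding I_def
  proof (rule subspaceI)
    show "0 \<in> range (L ^^ n)" using pow_zero[of n x, symmetric] unfolding L_def by blast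
  next
    fix a b assume "a \<in> range (L ^^ n)" "b \<in> range (L ^^ n)"
    then obtain a' b' where "a = (L ^^ n) a'" "b = (L ^^ n) b'" by blast
    then have "a + b = (L ^^ n) (a' + b')" by (simp add: L_def pow_add)
    then show "a + b \<in> range (L ^^ n)" by blast
  next
    fix c a assume "a \<in> range (L ^^ n)"
    then obtain a' where "a = (L ^^ n) a'" by blast
    then have "c *s a = (L ^^ n) (c *s a')" by (simp add: L_def pow_scale)
    then show "c *s a \<in> range (L ^^ n)" by blast
  qed
  have ISuc: "I (Suc n) = L ` I n" for n
    unfolding I_def by (simp add: image_comp)
  have Imono: "I (Suc n) \<subseteq> I n" for n
    unfolding I_def by (auto simp: funpow_Suc_right simp del: funpow.simps)
  obtain N where N: "N \<ge> 1" "\<And>n. n \<ge> 1 \<Longrightarrow> dim (I N) \<le> dim (I n)"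
    using ex_has_least_nat[of "\<lambda>n. n \<ge> (1::nat)" 1 "\<lambda>n. dim (I n)"] by auto
  have "dim (I N) \<le> dim (I (Suc N))" using N by simp
  then have IN1: "I (Suc N) = I N" using subspace_dim_equal[OF Isub Isub Imono] by blast
  have INk: "I (N + k) = I N" for k
  proof (induction k)
    case (Suc k)
    then show ?case using ISuc[of "N + k"] ISuc[of N] IN1 by simp
  qed simp
  have "K = UNIV"
  proof (rule ck[OF Ksub Kcl])
    show "{k + a | k a. k \<in> K \<and> a \<in> prod_sp scale m UNIV UNIV} = UNIV"
    proof -
      have "v \<in> {k + a | k a. k \<in> K \<and> a \<in> prod_sp scale m UNIV UNIV}" for v
      proof -
      have "(L ^^ N) v \<in> I (N + N)" using INk[of N] by (simp add: I_def)
      then obtain w where w: "(L ^^ N) v = (L ^^ N) ((L ^^ N) w)"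
        unfolding I_def by (auto simp: funpow_add)
      have "v - (L ^^ N) w \<in> K" unfolding K_def using w by (auto simp: L_def pow_diff intro!: exI[of _ N])
      moreover have "(L ^^ N) w \<in> prod_sp scale m UNIV UNIV"
      proof -
        obtain N' where "N = Suc N'" using N(1) by (cases N) auto
        then have "(L ^^ N) w = m x ((L ^^ N') w)" by (simp add: L_def)
        then show ?thesis unfolding prod_sp_def by (auto intro!: span_base)
      qed
      ultimately have "v = (v - (L ^^ N) w) + (L ^^ N) w" "v - (L ^^ N) w \<in> K"
        "(L ^^ N) w \<in> prod_sp scale m UNIV UNIV" by simp_all
      then show "v \<in> {k + a | k a. k \<in> K \<and> a \<in> prod_sp scale m UNIV UNIV}"
        by blast
      qed
      then show ?thesis by blast
    qed
  qed
  then show ?thesis unfolding K_def L_def by blast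
qed

end

theorem mainTheorem3:
  fixes scale :: "'k::field \<Rightarrow> 'v::ab_group_add \<Rightarrow> 'v"
    and m :: "'v \<Rightarrow> 'v \<Rightarrow> 'v"
  assumes "leibniz_algebra scale m"
    and "finite_dim scale"
  shows "nilpotent_alg scale m \<longleftrightarrow> condition_k scale m"
proof -
  have vs: "vector_space scale" and linR: "\<And>x. Vector_Spaces.linear scale scale (m x)"
    and linL: "\<And>y. Vector_Spaces.linear scale scale (\<lambda>x. m x y)"
    and lid: "\<And>x y z. m x (m y z) = m (m x y) z + m y (m x z)"
    using assms(1) unfolding leibniz_algebra_def by blast+
  interpret vector_space scale by (rule vs)
  obtain B where B: "finite B" "span B = UNIV" using assms(2) unfolding finite_dim_def by blast
  obtain B' where B': "B' \<subseteq> B" "independent B'" "B \<subseteq> span B'"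
    using maximal_independent_subset[of B] by blast
  have "span B \<subseteq> span B'" using span_mono[OF B'(3)] span_span by metis
  then have spB: "span B' = UNIV" using B(2) by blast
  have finB: "finite B'" using B(1) B'(1) finite_subset by blast
  have fdv: "finite_dimensional_vector_space scale B'"
    by (intro finite_dimensional_vector_space.intro vs finite_dimensional_vector_space_axioms.intro finB B'(2) spB)
  interpret L: leib scale B' m
  proof (intro leib.intro fdv leib_axioms.intro)
    fix a b c k x y z
    show "m (a + b) c = m a c + m b c" using linL[of c] unfolding Vector_Spaces.linear_iff by blast
    show "m a (b + c) = m a b + m a c" using linR[of a] unfolding Vector_Spaces.linear_iff by blast
    show "m (scale k a) b = scale k (m a b)" using linL[of b] unfolding Vector_Spaces.linear_iff by blast
    show "m a (scale k b) = scale k (m a b)" using linR[of a] unfolding Vector_Spaces.linear_iff by blast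
    show "m x (m y z) = m (m x y) z + m y (m x z)" by (rule lid)
  qed
  show ?thesis
  proof
    assume "nilpotent_alg scale m"
    then obtain t where t: "lcs scale m t = {0}" unfolding nilpotent_alg_def by blast
    show "condition_k scale m"
      unfolding condition_k_def subalgebra_def using L.nil_condk[OF t] by blast
  next
    assume ck: "condition_k scale m"
    have "\<exists>k. (m x ^^ k) v = 0" for x v
      by (rule L.condk_nilp) (use ck in \<open>auto simp: condition_k_def subalgebra_def\<close>)
    then show "nilpotent_alg scale m" unfolding nilpotent_alg_def using L.engel_nilpotent by blast
  qed
qed

end
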